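(* For every $t=0,1,\dots,T-1$: (a) the functions $H_t$ and $V_t$ are sub-$K_t$-convex; (b) $H_t(S_t)\le \inf_{z_j\in Z_\theta} H_t(z_j)$.
   Context: Model. Fix an integer horizon $T\ge 2$, a discount factor $\alpha\in(0,1]$, and for $t=0,\dots,T-1$: unit ordering costs $c_t\in\mathbb R$, a salvage coefficient $c_T\in\mathbb R$, setup costs $K_t\ge 0$, functions $G_t:\mathbb R\to\mathbb R$ (expected one-period holding/penalty cost), and independent nonnegative random demands $D_0,\dots,D_{T-1}$ with right-continuous distribution functions $F_t$ and finite means; all expectations appearing are assumed finite. Put $C_t(y)=(c_t-\alpha c_{t+1})y+G_t(y)+\alpha c_{t+1}E[D_t]$. Standing assumptions: (i) each $C_t$ is convex with $C_t(y)\to+\infty$ as $|y|\to\infty$; (ii) $K_t\ge \alpha K_{t+1}$ for $t=0,\dots,T-2$. Grid construction. Fix $\theta>0$, let $z_m=m\theta$ ($m\in\mathbb Z$), $Z_\theta=\{z_m:m\in\mathbb Z\}$, and $f_t(n)=F_t(z_{n+1})-F_t(z_n)$ for integers $n\ge -1$. Let $C^m_t=\min\{y: C_t(y)=\min_{x\in\mathbb R}C_t(x)\}$; with $n_0$ the integer such that $z_{n_0}<C^m_t\le z_{n_0+1}$, let $S^U_t=\min\{z_m\in Z_\theta: z_m\ge C^m_t,\ C_t(z_m)>C_t(z_{n_0})+K_t\}$. Let $s_{T-1}$ be a point with $s_{T-1}\le C^m_{T-1}$ and $C_{T-1}(s_{T-1})=C_{T-1}(C^m_{T-1})+K_{T-1}$,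 and set $\bar I_{T-1}=s_{T-1}$. For $t=T-2,\dots,0$ (backwards) set $I_t=\max\{z_m\in Z_\theta: z_m<\min(\bar I_{t+1}-\theta,\,C^m_t)\}$ and $\bar I_t=\max\{z_m\in Z_\theta: z_m\le I_t,\ C_t(z_m)>C_t(I_t)+K_t\}+\theta$. Set $H_{T-1}=C_{T-1}$, $S_{T-1}=C^m_{T-1}$. Whenever $H_t,S_t,s_t$ are defined, let $V_t(y)=H_t(S_t)+K_t$ for $y<s_t$ and $V_t(y)=H_t(y)$ for $y\ge s_t$. For $t=T-2,\dots,0$ (backwards): $H_t(y)=C_t(y)+\alpha\sum_{n=-1}^{\infty}V_{t+1}(y-z_n)f_t(n)$; $S_t=\max\{z_m\in Z_\theta: I_t\le z_m\le S^U_t,\ H_t(z_m)=\min\{H_t(z_n): z_n\in Z_\theta,\ I_t\le z_n\le S^U_t\}\}$; $s_t=S_t$ if $K_t=0$, and if $K_t>0$, $s_t=\min\{z_m\in Z_\theta:\bar I_t\le z_m\le S_t,\ H_t(z_m)\le H_t(S_t)+K_t\}$. Sub-$K$-convexity. For $K\ge 0$, a function $g:\mathbb R\to\mathbb R$ is sub-$K$-convex if for all $x\le y\le z_m$ with $x,y\in\mathbb R$, $z_m\in Z_\theta$, and $y=\tau x+(1-\tau)z_m$, $\tau\in[0,1]$, one has $g(y)\le \tau g(x)+(1-\tau)(g(z_m)+K)$. *)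

theory Defs
  imports "HOL-Probability.Probability"
begin

definition zg :: "real \<Rightarrow> int \<Rightarrow> real" where
  "zg \<theta> m = real_of_int m * \<theta>"

text \<open>C_t(y) = (c_t - alpha c_{t+1}) y + G_t(y) + alpha c_{t+1} E[D_t]; the demand D_t is
  given by its distribution, a probability measure on the Borel sets of the reals.\<close>
definition Ccost :: "real \<Rightarrow> (nat \<Rightarrow> real) \<Rightarrow> (nat \<Rightarrow> real \<Rightarrow> real) \<Rightarrow> (nat \<Rightarrow> real measure)
    \<Rightarrow> nat \<Rightarrow> real \<Rightarrow> real" where
  "Ccost \<alpha> c G D t y = (c t - \<alpha> * c (Suc t)) * y + G t y + \<alpha> * c (Suc t) * (\<integral>x. x \<partial>(D t))"

definition Fdist :: "(nat \<Rightarrow> real measure) \<Rightarrow> nat \<Rightarrow> real \<Rightarrow> real" where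
  "Fdist D t x = measure (D t) {..x}"

definition fmass :: "real \<Rightarrow> (nat \<Rightarrow> real measure) \<Rightarrow> nat \<Rightarrow> int \<Rightarrow> real" where
  "fmass \<theta> D t n = Fdist D t (zg \<theta> (n + 1)) - Fdist D t (zg \<theta> n)"

definition Cmin :: "(nat \<Rightarrow> real \<Rightarrow> real) \<Rightarrow> nat \<Rightarrow> real" where
  "Cmin C t = (LEAST y. \<forall>x. C t y \<le> C t x)"

definition n0 :: "(nat \<Rightarrow> real \<Rightarrow> real) \<Rightarrow> real \<Rightarrow> nat \<Rightarrow> int" where
  "n0 C \<theta> t = (THE n::int. zg \<theta> n < Cmin C t \<and> Cmin C t \<le> zg \<theta> (n + 1))"

definition SU :: "(nat \<Rightarrow> real \<Rightarrow> real) \<Rightarrow> (nat \<Rightarrow> real) \<Rightarrow> real \<Rightarrow> nat \<Rightarrow> real" where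
  "SU C K \<theta> t = zg \<theta> (LEAST m::int. zg \<theta> m \<ge> Cmin C t \<and>
      C t (zg \<theta> m) > C t (zg \<theta> (n0 C \<theta> t)) + K t)"

definition sLast :: "(nat \<Rightarrow> real \<Rightarrow> real) \<Rightarrow> (nat \<Rightarrow> real) \<Rightarrow> nat \<Rightarrow> real" where
  "sLast C K T = (THE s. s \<le> Cmin C (T - 1) \<and>
      C (T - 1) s = C (T - 1) (Cmin C (T - 1)) + K (T - 1))"

definition Inext :: "(nat \<Rightarrow> real \<Rightarrow> real) \<Rightarrow> real \<Rightarrow> nat \<Rightarrow> real \<Rightarrow> real" where
  "Inext C \<theta> t Ibar1 = zg \<theta> (GREATEST m::int. zg \<theta> m < min (Ibar1 - \<theta>) (Cmin C t))"

definition Ibarnext :: "(nat \<Rightarrow> real \<Rightarrow> real) \<Rightarrow> (nat \<Rightarrow> real) \<Rightarrow> real \<Rightarrow> nat \<Rightarrow> real \<Rightarrow> real" where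
  "Ibarnext C K \<theta> t It = zg \<theta> (GREATEST m::int. zg \<theta> m \<le> It \<and> C t (zg \<theta> m) > C t It + K t) + \<theta>"

primrec IbarA :: "(nat \<Rightarrow> real \<Rightarrow> real) \<Rightarrow> (nat \<Rightarrow> real) \<Rightarrow> real \<Rightarrow> nat \<Rightarrow> nat \<Rightarrow> real" where
  "IbarA C K \<theta> T 0 = sLast C K T"
| "IbarA C K \<theta> T (Suc k) =
     Ibarnext C K \<theta> (T - 2 - k) (Inext C \<theta> (T - 2 - k) (IbarA C K \<theta> T k))"

definition Ibar :: "(nat \<Rightarrow> real \<Rightarrow> real) \<Rightarrow> (nat \<Rightarrow> real) \<Rightarrow> real \<Rightarrow> nat \<Rightarrow> nat \<Rightarrow> real" where
  "Ibar C K \<theta> T t = IbarA C K \<theta> T (T - 1 - t)"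

definition Ival :: "(nat \<Rightarrow> real \<Rightarrow> real) \<Rightarrow> (nat \<Rightarrow> real) \<Rightarrow> real \<Rightarrow> nat \<Rightarrow> nat \<Rightarrow> real" where
  "Ival C K \<theta> T t = Inext C \<theta> t (Ibar C K \<theta> T (Suc t))"

definition Vof :: "(real \<Rightarrow> real) \<Rightarrow> real \<Rightarrow> real \<Rightarrow> real \<Rightarrow> real \<Rightarrow> real" where
  "Vof H S s Kt y = (if y < s then H S + Kt else H y)"

definition Sgrid :: "real \<Rightarrow> (real \<Rightarrow> real) \<Rightarrow> real \<Rightarrow> real \<Rightarrow> real" where
  "Sgrid \<theta> H lo hi =
     (let A = {m::int. lo \<le> zg \<theta> m \<and> zg \<theta> m \<le> hi};
          mv = Min ((\<lambda>m. H (zg \<theta> m)) ` A)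
      in zg \<theta> (Max {m \<in> A. H (zg \<theta> m) = mv}))"

definition sgrid :: "real \<Rightarrow> real \<Rightarrow> (real \<Rightarrow> real) \<Rightarrow> real \<Rightarrow> real \<Rightarrow> real" where
  "sgrid \<theta> Kt H S lo =
     (if Kt = 0 then S
      else zg \<theta> (Min {m::int. lo \<le> zg \<theta> m \<and> zg \<theta> m \<le> S \<and> H (zg \<theta> m) \<le> H S + Kt}))"

text \<open>stage k = (H_t, S_t, s_t) for t = T-1-k.  The series runs over n = j - 1 \<ge> -1.\<close>
primrec stage :: "(nat \<Rightarrow> real \<Rightarrow> real) \<Rightarrow> (nat \<Rightarrow> real) \<Rightarrow> real \<Rightarrow> nat \<Rightarrow> real
    \<Rightarrow> (nat \<Rightarrow> real measure) \<Rightarrow> nat \<Rightarrow> (real \<Rightarrow> real) \<times> real \<times> real" where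
  "stage C K \<theta> T \<alpha> D 0 = (C (T - 1), Cmin C (T - 1), sLast C K T)"
| "stage C K \<theta> T \<alpha> D (Suc k) =
     (let t = T - 2 - k;
          (H1, S1, s1) = stage C K \<theta> T \<alpha> D k;
          V1 = Vof H1 S1 s1 (K (Suc t));
          H = (\<lambda>y. C t y + \<alpha> * (\<Sum>j. V1 (y - zg \<theta> (int j - 1)) * fmass \<theta> D t (int j - 1)));
          S = Sgrid \<theta> H (Ival C K \<theta> T t) (SU C K \<theta> t);
          s = sgrid \<theta> (K t) H S (Ibar C K \<theta> T t)
      in (H, S, s))"

definition Hf :: "(nat \<Rightarrow> real \<Rightarrow> real) \<Rightarrow> (nat \<Rightarrow> real) \<Rightarrow> real \<Rightarrow> nat \<Rightarrow> real
    \<Rightarrow> (nat \<Rightarrow> real measure) \<Rightarrow> nat \<Rightarrow> real \<Rightarrow> real" where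
  "Hf C K \<theta> T \<alpha> D t = fst (stage C K \<theta> T \<alpha> D (T - 1 - t))"

definition Sf :: "(nat \<Rightarrow> real \<Rightarrow> real) \<Rightarrow> (nat \<Rightarrow> real) \<Rightarrow> real \<Rightarrow> nat \<Rightarrow> real
    \<Rightarrow> (nat \<Rightarrow> real measure) \<Rightarrow> nat \<Rightarrow> real" where
  "Sf C K \<theta> T \<alpha> D t = fst (snd (stage C K \<theta> T \<alpha> D (T - 1 - t)))"

definition sf :: "(nat \<Rightarrow> real \<Rightarrow> real) \<Rightarrow> (nat \<Rightarrow> real) \<Rightarrow> real \<Rightarrow> nat \<Rightarrow> real
    \<Rightarrow> (nat \<Rightarrow> real measure) \<Rightarrow> nat \<Rightarrow> real" where
  "sf C K \<theta> T \<alpha> D t = snd (snd (stage C K \<theta> T \<alpha> D (T - 1 - t)))"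

definition Vf :: "(nat \<Rightarrow> real \<Rightarrow> real) \<Rightarrow> (nat \<Rightarrow> real) \<Rightarrow> real \<Rightarrow> nat \<Rightarrow> real
    \<Rightarrow> (nat \<Rightarrow> real measure) \<Rightarrow> nat \<Rightarrow> real \<Rightarrow> real" where
  "Vf C K \<theta> T \<alpha> D t =
     Vof (Hf C K \<theta> T \<alpha> D t) (Sf C K \<theta> T \<alpha> D t) (sf C K \<theta> T \<alpha> D t) (K t)"

definition subKconvex :: "real \<Rightarrow> real \<Rightarrow> (real \<Rightarrow> real) \<Rightarrow> bool" where
  "subKconvex \<theta> K g \<longleftrightarrow>
     (\<forall>x y \<tau>. \<forall>m::int. x \<le> y \<and> y \<le> zg \<theta> m \<and> 0 \<le> \<tau> \<and> \<tau> \<le> 1 \<and>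
        y = \<tau> * x + (1 - \<tau>) * zg \<theta> m \<longrightarrow>
        g y \<le> \<tau> * g x + (1 - \<tau>) * (g (zg \<theta> m) + K))"

end

theory Submission
  imports Defs
begin


definition tp :: "(real \<Rightarrow> real) \<Rightarrow> real \<Rightarrow> real \<Rightarrow> real \<Rightarrow> real \<Rightarrow> bool" where
  "tp H K x y z \<longleftrightarrow> (z - x) * H y \<le> (z - y) * H x + (y - x) * (H z + K)"

lemma zg_diff: "zg \<theta> a - zg \<theta> b = zg \<theta> (a - b)"
  by (simp add: zg_def algebra_simps)

lemma zg_mono: "\<theta> > 0 \<Longrightarrow> a \<le> b \<Longrightarrow> zg \<theta> a \<le> zg \<theta> b"
  by (simp add: zg_def)

lemma zg_le_iff: "\<theta> > 0 \<Longrightarrow> zg \<theta> a \<le> zg \<theta> b \<longleftrightarrow> a \<le> b"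
  by (simp add: zg_def)

lemma zg_less_iff: "\<theta> > 0 \<Longrightarrow> zg \<theta> a < zg \<theta> b \<longleftrightarrow> a < b"
  by (simp add: zg_def)

lemma convex3:
  fixes f :: "real \<Rightarrow> real"
  assumes "convex_on UNIV f" "x \<le> y" "y \<le> z"
  shows "(z - x) * f y \<le> (z - y) * f x + (y - x) * f z"
proof (cases "x = z")
  case True then show ?thesis using assms by simp
next
  case False
  then have d: "z - x > 0" using assms by simp
  have c: "convex_on {x..z} f" using assms(1) convex_on_subset by blast
  have "f y \<le> (f z - f x) / (z - x) * (y - x) + f x"
    using convex_onD_Icc'[OF c] assms by auto
  then have "(z - x) * f y \<le> (z - x) * ((f z - f x) / (z - x) * (y - x) + f x)"
    using d by (simp add: mult_left_mono)
  also have "\<dots> = (z - y) * f x + (y - x) * f z" using d by (simp add: field_simps)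
  finally show ?thesis .
qed

lemma tp_subK:
  assumes K0: "K \<ge> 0" and "\<And>x y m. x \<le> y \<Longrightarrow> y \<le> zg \<theta> m \<Longrightarrow> tp H K x y (zg \<theta> m)"
  shows "subKconvex \<theta> K H"
  unfolding subKconvex_def
proof (intro allI impI)
  fix x y \<tau> and m :: int
  assume a: "x \<le> y \<and> y \<le> zg \<theta> m \<and> 0 \<le> \<tau> \<and> \<tau> \<le> 1 \<and> y = \<tau> * x + (1 - \<tau>) * zg \<theta> m"
  let ?z = "zg \<theta> m"
  show "H y \<le> \<tau> * H x + (1 - \<tau>) * (H ?z + K)"
  proof (cases "x = ?z")
    case True
    then have "y = x" using a by auto
    then show ?thesis using True K0 a by (simp add: algebra_simps mult_left_le)
  next
    case False
    then have d: "?z - x > 0" using a by auto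
    have t: "tp H K x y ?z" using assms a by blast
    have e1: "?z - y = \<tau> * (?z - x)" and e2: "y - x = (1 - \<tau>) * (?z - x)" using a by (auto simp: algebra_simps)
    have "(?z - x) * H y \<le> (?z - x) * (\<tau> * H x + (1 - \<tau>) * (H ?z + K))"
      using t unfolding tp_def e1 e2 by (simp add: algebra_simps)
    then show ?thesis using d by simp
  qed
qed

definition inv :: "real \<Rightarrow> (real \<Rightarrow> real) \<Rightarrow> real \<Rightarrow> real \<Rightarrow> real \<Rightarrow> real \<Rightarrow> bool" where
  "inv \<theta> H S s K lo \<longleftrightarrow> 0 \<le> K \<and> s \<le> S \<and> H s \<le> H S + K \<and> lo \<le> s \<and> (\<forall>m. H S \<le> H (zg \<theta> m)) \<and>
     (\<forall>x y z. x \<le> y \<and> y \<le> z \<and> (z = S \<or> (\<exists>m. z = zg \<theta> m)) \<longrightarrow> tp H K x y z)"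

lemma inv_left:
  assumes I: "inv \<theta> H S s K lo" and y: "s \<le> y" "y \<le> S"
  shows "H y \<le> H S + K"
proof (cases "y = S")
  case True then show ?thesis using I by (simp add: inv_def)
next
  case False
  then have d: "S - s > 0" using y by simp
  have "tp H K s y S" using I y unfolding inv_def by blast
  then have "(S - s) * H y \<le> (S - y) * H s + (y - s) * (H S + K)" by (simp add: tp_def)
  also have "\<dots> \<le> (S - y) * (H S + K) + (y - s) * (H S + K)"
    using I y by (intro add_right_mono mult_left_mono) (auto simp: inv_def)
  also have "\<dots> = (S - s) * (H S + K)" by (simp add: algebra_simps)
  finally show ?thesis using d by simp
qed

lemma inv_right:
  assumes I: "inv \<theta> H S s K lo" and y: "S \<le> y" "y \<le> zg \<theta> m"
  shows "H y \<le> H (zg \<theta> m) + K"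
proof (cases "y = zg \<theta> m")
  case True then show ?thesis using I by (simp add: inv_def)
next
  case False
  let ?z = "zg \<theta> m"
  have d: "?z - S > 0" using y False by simp
  have "tp H K S y ?z" using I y unfolding inv_def by blast
  then have "(?z - S) * H y \<le> (?z - y) * H S + (y - S) * (H ?z + K)" by (simp add: tp_def)
  also have "\<dots> \<le> (?z - y) * (H ?z + K) + (y - S) * (H ?z + K)"
    proof -
    have "H S \<le> H ?z + K" using I by (auto simp: inv_def intro: add_increasing2)
    then show ?thesis using y by (intro add_right_mono mult_left_mono) auto
  qed
  also have "\<dots> = (?z - S) * (H ?z + K)" by (simp add: algebra_simps)
  finally show ?thesis using d by simp
qed

lemma V_ge:
  assumes I: "inv \<theta> H S s K lo"
  shows "H S \<le> Vof H S s K (zg \<theta> m)"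
  using I by (auto simp: Vof_def inv_def)

lemma V_mono:
  assumes I: "inv \<theta> H S s K lo" and th: "\<theta> > 0" and ab: "b \<le> a"
  shows "Vof H S s K (zg \<theta> b) \<le> Vof H S s K (zg \<theta> a) + K"
proof (cases "zg \<theta> b < s")
  case True
  then show ?thesis using V_ge[OF I, of a] by (simp add: Vof_def)
next
  case False
  have ba: "zg \<theta> b \<le> zg \<theta> a" using zg_mono[OF th ab] .
  then have V: "Vof H S s K (zg \<theta> b) = H (zg \<theta> b)" "Vof H S s K (zg \<theta> a) = H (zg \<theta> a)"
    using False by (auto simp: Vof_def)
  show ?thesis
  proof (cases "zg \<theta> b \<le> S")
    case True
    then have "H (zg \<theta> b) \<le> H S + K" using inv_left[OF I] False by simp
    moreover have "H S \<le> H (zg \<theta> a)" using I by (auto simp: inv_def)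
    ultimately show ?thesis using V by simp
  next
    case f2: False
    then show ?thesis using inv_right[OF I _ ba] V by simp
  qed
qed

lemma V_const:
  assumes I: "inv \<theta> H S s K lo" and u: "u < lo"
  shows "Vof H S s K u = H S + K"
  using I u by (auto simp: Vof_def inv_def)


lemma V_tp:
  assumes I: "inv \<theta> H S s K lo" and xy: "x \<le> y" "y \<le> zg \<theta> m"
  shows "tp (Vof H S s K) K x y (zg \<theta> m)"
proof -
  let ?z = "zg \<theta> m" and ?V = "Vof H S s K"
  have K0: "K \<ge> 0" and HSz: "H S \<le> H ?z" using I by (auto simp: inv_def)
  have Vz: "H S \<le> ?V ?z" using V_ge[OF I] .
  show ?thesis
  proof (cases "y < s")
    case True
    then have "?V y = H S + K" "?V x = H S + K" using xy by (auto simp: Vof_def)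
    moreover have "(y - x) * (H S + K) \<le> (y - x) * (?V ?z + K)"
      using Vz xy by (intro mult_left_mono) auto
    ultimately show ?thesis unfolding tp_def by (simp add: algebra_simps)
  next
    case ys: False
    then have Vy: "?V y = H y" and Vzz: "?V ?z = H ?z" using xy by (auto simp: Vof_def)
    show ?thesis
    proof (cases "x < s")
      case False
      then have "?V x = H x" by (simp add: Vof_def)
      moreover have "tp H K x y ?z" using I xy unfolding inv_def by blast
      ultimately show ?thesis using Vy Vzz by (simp add: tp_def)
    next
      case xs: True
      then have Vx: "?V x = H S + K" by (simp add: Vof_def)
      show ?thesis
      proof (cases "y < S")
        case True
        then have Hy: "H y \<le> H S + K" using inv_left[OF I] ys by simp
        have "(?z - x) * H y \<le> (?z - x) * (H S + K)" using Hy xy by (intro mult_left_mono) auto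
        also have "\<dots> = (?z - y) * (H S + K) + (y - x) * (H S + K)" by (simp add: algebra_simps)
        also have "\<dots> \<le> (?z - y) * (H S + K) + (y - x) * (H ?z + K)"
          using HSz xy by (intro add_left_mono mult_left_mono) auto
        finally show ?thesis unfolding tp_def Vx Vy Vzz .
      next
        case False
        have sS: "s \<le> S" using I by (simp add: inv_def)
        have allt: "\<forall>x y z. x \<le> y \<and> y \<le> z \<and> (z = S \<or> (\<exists>m. z = zg \<theta> m)) \<longrightarrow> tp H K x y z"
          using I unfolding inv_def by blast
        have t: "tp H K S y ?z" using allt[rule_format, of S y ?z] xy False by auto
        define P where "P = H ?z + K - H S"
        have P0: "P \<ge> 0" using HSz K0 by (simp add: P_def)
        have A: "(?z - S) * H y \<le> (?z - y) * H S + (y - S) * (H S + P)"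
          using t by (simp add: tp_def P_def)
        have zx: "?z - x > 0" using xs sS False xy by linarith
        have zS: "?z - S \<ge> 0" using False xy by linarith
        have "(?z - x) * ((?z - S) * H y) \<le> (?z - x) * ((?z - y) * H S + (y - S) * (H S + P))"
          using A zx by (intro mult_left_mono) simp_all
        then have B: "(?z - S) * ((?z - x) * H y) \<le> (?z - x) * (?z - S) * H S + (?z - x) * (y - S) * P"
          by (simp add: algebra_simps)
        have C1: "(?z - x) * (y - S) * P \<le> (?z - S) * (?z - y) * K + (?z - S) * (y - x) * P"
        proof -
          have "(?z - S) * (y - x) * P - (?z - x) * (y - S) * P = (?z - y) * (S - x) * P"
            by (simp add: algebra_simps)
          moreover have "(?z - y) * (S - x) * P \<ge> 0" using xy xs sS P0 by (intro mult_nonneg_nonneg) auto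
          moreover have "(?z - S) * (?z - y) * K \<ge> 0" using zS xy K0 by (intro mult_nonneg_nonneg) auto
          ultimately show ?thesis by linarith
        qed
        have M: "(?z - S) * ((?z - x) * H y) \<le> (?z - S) * ((?z - y) * (H S + K) + (y - x) * (H S + P))"
          using B C1 by (simp add: algebra_simps)
        show ?thesis
        proof (cases "?z = S")
          case True
          then have "y = ?z" using False xy by simp
          then show ?thesis unfolding tp_def Vx Vy Vzz using K0 zx
            by (simp add: algebra_simps mult_left_mono less_imp_le)
        next
          case False
          then have "?z - S > 0" using zS by simp
          then have "(?z - x) * H y \<le> (?z - y) * (H S + K) + (y - x) * (H S + P)"
            using M by simp
          then show ?thesis unfolding tp_def Vx Vy Vzz P_def by simp
        qed
      qed
    qed
  qed
qed



definition Phi :: "real \<Rightarrow> (real \<Rightarrow> real) \<Rightarrow> (nat \<Rightarrow> real) \<Rightarrow> real \<Rightarrow> real" where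
  "Phi \<theta> g w y = (\<Sum>j. g (y - zg \<theta> (int j - 1)) * w j)"

lemma Phi_tp:
  assumes K0: "Kg \<ge> 0"
    and gt: "\<And>x y m. x \<le> y \<Longrightarrow> y \<le> zg \<theta> m \<Longrightarrow> tp g Kg x y (zg \<theta> m)"
    and sm: "\<And>y. summable (\<lambda>j. \<bar>g (y - zg \<theta> (int j - 1)) * w j\<bar>)"
    and w0: "\<And>j. w j \<ge> 0" and ws: "summable w" and w1: "suminf w \<le> 1"
    and xy: "x \<le> y" "y \<le> zg \<theta> m"
  shows "tp (Phi \<theta> g w) Kg x y (zg \<theta> m)"
proof -
  let ?z = "zg \<theta> m"
  let ?n = "\<lambda>j. zg \<theta> (int j - 1)"
  define a where "a = (\<lambda>u j. g (u - ?n j) * w j)"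
  have sa: "summable (a u)" for u
    using summable_rabs_cancel[OF sm[of u]] by (simp add: a_def)
  have trm: "(?z - x) * a y j \<le> (?z - y) * a x j + (y - x) * a ?z j + (y - x) * Kg * w j" for j
  proof -
    have zz: "?z - ?n j = zg \<theta> (m - (int j - 1))" by (simp add: zg_diff)
    have "tp g Kg (x - ?n j) (y - ?n j) (zg \<theta> (m - (int j - 1)))"
      using gt[of "x - ?n j" "y - ?n j" "m - (int j - 1)"] xy zz by simp
    then have "(?z - x) * g (y - ?n j) \<le> (?z - y) * g (x - ?n j) + (y - x) * (g (?z - ?n j) + Kg)"
      unfolding tp_def zz[symmetric] by simp
    from mult_right_mono[OF this w0[of j]]
    show ?thesis by (simp add: a_def algebra_simps)
  qed
  have s1: "summable (\<lambda>j. (?z - x) * a y j)" using sa by (intro summable_mult)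
  have s2: "summable (\<lambda>j. (?z - y) * a x j + (y - x) * a ?z j + (y - x) * Kg * w j)"
    using sa ws by (intro summable_add summable_mult)
  have "(\<Sum>j. (?z - x) * a y j) \<le> (\<Sum>j. (?z - y) * a x j + (y - x) * a ?z j + (y - x) * Kg * w j)"
    using suminf_le[OF trm s1 s2] .
  also have "\<dots> = (?z - y) * suminf (a x) + (y - x) * suminf (a ?z) + (y - x) * Kg * suminf w"
    using sa ws
    by (simp add: suminf_add[symmetric] summable_mult suminf_mult summable_add)
  also have "(y - x) * Kg * suminf w \<le> (y - x) * Kg * 1"
    using w1 xy K0 by (intro mult_left_mono) auto
  finally have "(?z - x) * suminf (a y) \<le> (?z - y) * suminf (a x) + (y - x) * suminf (a ?z) + (y - x) * Kg"
    using sa by (simp add: suminf_mult)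
  then show ?thesis unfolding tp_def Phi_def a_def by (simp add: algebra_simps)
qed

lemma Phi_mono:
  assumes gm: "\<And>b a. b \<le> a \<Longrightarrow> g (zg \<theta> b) \<le> g (zg \<theta> a) + Kg"
    and sm: "\<And>y. summable (\<lambda>j. \<bar>g (y - zg \<theta> (int j - 1)) * w j\<bar>)"
    and w0: "\<And>j. w j \<ge> 0" and ws: "summable w" and w1: "suminf w \<le> 1" and K0: "Kg \<ge> 0"
    and ba: "b \<le> a"
  shows "Phi \<theta> g w (zg \<theta> b) \<le> Phi \<theta> g w (zg \<theta> a) + Kg"
proof -
  let ?n = "\<lambda>j. zg \<theta> (int j - 1)"
  define A where "A = (\<lambda>u j. g (u - ?n j) * w j)"
  have sa: "summable (A u)" for u
    using summable_rabs_cancel[OF sm[of u]] by (simp add: A_def)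
  have trm: "A (zg \<theta> b) j \<le> A (zg \<theta> a) j + Kg * w j" for j
  proof -
    have "g (zg \<theta> (b - (int j - 1))) \<le> g (zg \<theta> (a - (int j - 1))) + Kg"
      using gm ba by simp
    from mult_right_mono[OF this w0[of j]]
    show ?thesis by (simp add: A_def zg_diff algebra_simps)
  qed
  have "suminf (A (zg \<theta> b)) \<le> (\<Sum>j. A (zg \<theta> a) j + Kg * w j)"
    using suminf_le[OF trm sa] sa ws by (simp add: summable_add summable_mult)
  also have "\<dots> = suminf (A (zg \<theta> a)) + Kg * suminf w"
    using sa ws by (simp add: suminf_add[symmetric] summable_mult suminf_mult)
  also have "Kg * suminf w \<le> Kg" using K0 w1 by (simp add: mult_left_le)
  finally show ?thesis unfolding Phi_def A_def by simp
qed

lemma Phi_const: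
  assumes gc: "\<And>u. u < c \<Longrightarrow> g u = g0" and th: "\<theta> > 0"
    and y: "y + \<theta> < c" and y': "y' + \<theta> < c"
  shows "Phi \<theta> g w y = Phi \<theta> g w y'"
proof -
  have n: "zg \<theta> (int j - 1) \<ge> - \<theta>" for j
    using th by (simp add: zg_def algebra_simps)
  have "g (y - zg \<theta> (int j - 1)) = g (y' - zg \<theta> (int j - 1))" for j
    using gc n[of j] y y' by (smt (verit))
  then show ?thesis unfolding Phi_def by simp
qed



lemma coerc:
  fixes f :: "real \<Rightarrow> real"
  assumes "filterlim f at_top at_infinity"
  shows "\<exists>R\<ge>0. \<forall>y. R \<le> \<bar>y\<bar> \<longrightarrow> B < f y"
proof -
  have "eventually (\<lambda>y. B + 1 \<le> f y) at_infinity"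
    using assms by (simp add: filterlim_at_top)
  then obtain b where b: "\<forall>y. b \<le> norm y \<longrightarrow> B + 1 \<le> f y"
    unfolding eventually_at_infinity by blast
  show ?thesis
    by (rule exI[of _ "max b 0"]) (use b in auto)
qed

lemma convex_dec:
  fixes f :: "real \<Rightarrow> real"
  assumes "convex_on UNIV f" "\<forall>u. f m \<le> f u" "x \<le> y" "y \<le> m"
  shows "f y \<le> f x"
proof -
  have "f y \<le> max (f x) (f m)"
    using convex_on_le_max[of x m f y] convex_on_subset[OF assms(1), of "{x..m}"] assms by auto
  then show ?thesis using assms(2) by auto
qed

lemma convex_inc:
  fixes f :: "real \<Rightarrow> real"
  assumes "convex_on UNIV f" "\<forall>u. f m \<le> f u" "m \<le> y" "y \<le> z"
  shows "f y \<le> f z"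
proof -
  have "f y \<le> max (f m) (f z)"
    using convex_on_le_max[of m z f y] convex_on_subset[OF assms(1), of "{m..z}"] assms by auto
  then show ?thesis using assms(2) by auto
qed

lemma cmin_exists:
  fixes f :: "real \<Rightarrow> real"
  assumes cv: "convex_on UNIV f" and co: "filterlim f at_top at_infinity"
  shows "(\<forall>x. f (LEAST y. \<forall>x. f y \<le> f x) \<le> f x) \<and>
         (\<forall>y. (\<forall>x. f y \<le> f x) \<longrightarrow> (LEAST y. \<forall>x. f y \<le> f x) \<le> y)"
proof -
  have ct: "continuous_on UNIV f" using convex_on_continuous[OF open_UNIV cv] .
  obtain R where R: "R \<ge> 0" "\<forall>y. R \<le> \<bar>y\<bar> \<longrightarrow> f 0 < f y" using coerc[OF co] by blast
  have "\<exists>x\<in>{-R..R}. \<forall>y\<in>{-R..R}. f x \<le> f y"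
    by (rule continuous_attains_inf) (use R(1) continuous_on_subset[OF ct subset_UNIV] in auto)
  then obtain x0 where x0: "x0 \<in> {-R..R}" "\<forall>y\<in>{-R..R}. f x0 \<le> f y" by blast
  have gm: "f x0 \<le> f y" for y
  proof (cases "y \<in> {-R..R}")
    case True then show ?thesis using x0 by auto
  next
    case False
    then have "f 0 < f y" using R by auto
    moreover have "f x0 \<le> f 0" using x0 R by auto
    ultimately show ?thesis by simp
  qed
  define M where "M = {y. f y = f x0}"
  have Mne: "M \<noteq> {}" using M_def by auto
  have Mcl: "closed M" unfolding M_def
    by (rule closed_Collect_eq[OF ct continuous_on_const])
  have Mb: "y \<in> M \<Longrightarrow> - R \<le> y" for y
  proof (rule ccontr)
    assume "y \<in> M" "\<not> - R \<le> y"
    then have "f 0 < f y" using R by auto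
    moreover have "f x0 \<le> f 0" using gm by auto
    ultimately show False using \<open>y \<in> M\<close> by (simp add: M_def)
  qed
  have bb: "bdd_below M" by (rule bdd_belowI[of _ "-R"]) (use Mb in auto)
  have IM: "Inf M \<in> M" using closed_contains_Inf[OF Mne bb Mcl] .
  have minM: "(\<forall>x. f y \<le> f x) \<longleftrightarrow> y \<in> M" for y
  proof
    assume "\<forall>x. f y \<le> f x"
    then have "f y \<le> f x0" by blast
    then show "y \<in> M" using gm[of y] by (simp add: M_def)
  next
    assume "y \<in> M"
    then show "\<forall>x. f y \<le> f x" using gm by (simp add: M_def)
  qed
  have L: "(LEAST y. \<forall>x. f y \<le> f x) = Inf M"
  proof (rule Least_equality)
    show "\<forall>x. f (Inf M) \<le> f x" using IM minM by blast
    show "\<And>y. \<forall>x. f y \<le> f x \<Longrightarrow> Inf M \<le> y" using minM bb by (meson cInf_lower)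
  qed
  show ?thesis unfolding L using IM minM bb by (meson cInf_lower)
qed

lemma int_greatest:
  fixes P :: "int \<Rightarrow> bool"
  assumes "P m0" "\<And>m. P m \<Longrightarrow> m \<le> B"
  shows "P (GREATEST m. P m) \<and> (\<forall>m. P m \<longrightarrow> m \<le> (GREATEST m. P m))"
proof -
  define M where "M = Max {m. P m \<and> m0 \<le> m}"
  have fin: "finite {m. P m \<and> m0 \<le> m}"
    by (rule finite_subset[of _ "{m0..B}"]) (use assms in auto)
  have ne: "{m. P m \<and> m0 \<le> m} \<noteq> {}" using assms by auto
  have PM: "P M" using Max_in[OF fin ne] by (simp add: M_def)
  have ub: "P m \<Longrightarrow> m \<le> M" for m
  proof (cases "m0 \<le> m")
    case True
    assume "P m" then show ?thesis using Max_ge[OF fin] True by (simp add: M_def)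
  next
    case False
    have "m0 \<le> M" using Max_in[OF fin ne] by (simp add: M_def)
    then show ?thesis using False by simp
  qed
  have "(GREATEST m. P m) = M" by (rule Greatest_equality) (use PM ub in auto)
  then show ?thesis using PM ub by simp
qed

lemma int_least:
  fixes P :: "int \<Rightarrow> bool"
  assumes "P m0" "\<And>m. P m \<Longrightarrow> B \<le> m"
  shows "P (LEAST m. P m) \<and> (\<forall>m. P m \<longrightarrow> (LEAST m. P m) \<le> m)"
proof -
  define M where "M = Min {m. P m \<and> m \<le> m0}"
  have fin: "finite {m. P m \<and> m \<le> m0}"
    by (rule finite_subset[of _ "{B..m0}"]) (use assms in auto)
  have ne: "{m. P m \<and> m \<le> m0} \<noteq> {}" using assms by auto
  have PM: "P M" using Min_in[OF fin ne] by (simp add: M_def)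
  have lb: "P m \<Longrightarrow> M \<le> m" for m
  proof (cases "m \<le> m0")
    case True
    assume "P m" then show ?thesis using Min_le[OF fin] True by (simp add: M_def)
  next
    case False
    have "M \<le> m0" using Min_in[OF fin ne] by (simp add: M_def)
    then show ?thesis using False by simp
  qed
  have "(LEAST m. P m) = M" by (rule Least_equality) (use PM lb in auto)
  then show ?thesis using PM lb by simp
qed

lemma fin_grid:
  assumes th: "\<theta> > 0"
  shows "finite {m::int. lo \<le> zg \<theta> m \<and> zg \<theta> m \<le> hi}"
proof (rule finite_subset[of _ "{\<lceil>lo/\<theta>\<rceil>..\<lfloor>hi/\<theta>\<rfloor>}"])
  show "{m::int. lo \<le> zg \<theta> m \<and> zg \<theta> m \<le> hi} \<subseteq> {\<lceil>lo/\<theta>\<rceil>..\<lfloor>hi/\<theta>\<rfloor>}"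
  proof
    fix m assume "m \<in> {m::int. lo \<le> zg \<theta> m \<and> zg \<theta> m \<le> hi}"
    then have "lo / \<theta> \<le> m" "m \<le> hi / \<theta>" using th by (auto simp: zg_def field_simps)
    then show "m \<in> {\<lceil>lo/\<theta>\<rceil>..\<lfloor>hi/\<theta>\<rfloor>}" by (simp add: ceiling_le_iff le_floor_iff)
  qed
qed simp

lemma grid_below:
  assumes th: "\<theta> > 0"
  shows "\<exists>m. zg \<theta> m \<le> c"
  by (rule exI[of _ "\<lfloor>c/\<theta>\<rfloor>"]) (use th in \<open>simp add: zg_def, metis floor_divide_lower\<close>)

lemma grid_above:
  assumes th: "\<theta> > 0"
  shows "\<exists>m. c \<le> zg \<theta> m"
  by (rule exI[of _ "\<lceil>c/\<theta>\<rceil>"]) (use th in \<open>simp add: zg_def, metis ceiling_divide_upper\<close>)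

lemma grid_ub: "\<theta> > 0 \<Longrightarrow> zg \<theta> m \<le> c \<Longrightarrow> m \<le> \<lceil>c/\<theta>\<rceil>"
proof -
  assume "\<theta> > 0" "zg \<theta> m \<le> c"
  then have "real_of_int m \<le> c/\<theta>" by (simp add: zg_def pos_le_divide_eq)
  then show ?thesis by (metis ceiling_mono ceiling_of_int)
qed

lemma grid_lb: "\<theta> > 0 \<Longrightarrow> c \<le> zg \<theta> m \<Longrightarrow> \<lfloor>c/\<theta>\<rfloor> \<le> m"
proof -
  assume "\<theta> > 0" "c \<le> zg \<theta> m"
  then have "c/\<theta> \<le> real_of_int m" by (simp add: zg_def pos_divide_le_eq)
  then show ?thesis by (metis floor_mono floor_of_int)
qed

lemma n0_prop:
  assumes th: "\<theta> > 0"
  shows "zg \<theta> (n0 C \<theta> t) < Cmin C t \<and> Cmin C t \<le> zg \<theta> (n0 C \<theta> t + 1)"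
proof -
  let ?c = "Cmin C t"
  have ex: "\<exists>!n::int. zg \<theta> n < ?c \<and> ?c \<le> zg \<theta> (n + 1)"
  proof
    let ?n = "\<lceil>?c/\<theta>\<rceil> - 1"
    have a: "real_of_int \<lceil>?c/\<theta>\<rceil> - 1 < ?c/\<theta>" "?c/\<theta> \<le> real_of_int \<lceil>?c/\<theta>\<rceil>"
      using ceiling_correct by auto
    have c: "\<theta> * (?c/\<theta>) = ?c" using th by simp
    have b1: "\<theta> * (real_of_int \<lceil>?c/\<theta>\<rceil> - 1) < \<theta> * (?c/\<theta>)"
      using a(1) th by (rule mult_strict_left_mono)
    have b2: "\<theta> * (?c/\<theta>) \<le> \<theta> * real_of_int \<lceil>?c/\<theta>\<rceil>"
      using a(2) th by (intro mult_left_mono) auto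
    show "zg \<theta> ?n < ?c \<and> ?c \<le> zg \<theta> (?n + 1)"
      using b1 b2 c th unfolding zg_def by (simp add: algebra_simps)
    fix n assume n: "zg \<theta> n < ?c \<and> ?c \<le> zg \<theta> (n + 1)"
    then have "n < ?c/\<theta>" "?c/\<theta> \<le> n + 1" using th by (auto simp: zg_def field_simps)
    then show "n = ?n" by linarith
  qed
  show ?thesis unfolding n0_def using theI'[OF ex] .
qed



lemma step:
  fixes C :: "nat \<Rightarrow> real \<Rightarrow> real" and K :: "nat \<Rightarrow> real" and w :: "nat \<Rightarrow> real"
  assumes th: "\<theta> > 0" and al: "\<alpha> > 0"
    and cv: "convex_on UNIV (C t)" and co: "filterlim (C t) at_top at_infinity"
    and Kt: "K t \<ge> 0" and KK: "\<alpha> * K1 \<le> K t"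
    and I1: "inv \<theta> H1 S1 s1 K1 lo1"
    and sm: "\<And>y. summable (\<lambda>j. \<bar>Vof H1 S1 s1 K1 (y - zg \<theta> (int j - 1)) * w j\<bar>)"
    and w0: "\<And>j. w j \<ge> 0" and ws: "summable w" and w1: "suminf w \<le> 1"
    and Hdef: "H = (\<lambda>y. C t y + \<alpha> * (\<Sum>j. Vof H1 S1 s1 K1 (y - zg \<theta> (int j - 1)) * w j))"
    and Idef: "I = Inext C \<theta> t lo1"
    and Ibdef: "Ib = Ibarnext C K \<theta> t I"
    and Sdef: "S = Sgrid \<theta> H I (SU C K \<theta> t)"
    and sdef: "s = sgrid \<theta> (K t) H S Ib"
  shows "inv \<theta> H S s (K t) Ib"
proof -
  define V where "V = Vof H1 S1 s1 K1"
  define \<Phi> where "\<Phi> = Phi \<theta> V w"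
  have Heq: "H y = C t y + \<alpha> * \<Phi> y" for y
    by (simp add: Hdef \<Phi>_def Phi_def V_def)
  have K1: "K1 \<ge> 0" using I1 by (simp add: inv_def)
  define Cm where "Cm = Cmin C t"
  have cm: "\<forall>x. C t Cm \<le> C t x"
    using cmin_exists[OF cv co] unfolding Cm_def Cmin_def by blast
  have Htp: "tp H (K t) x y (zg \<theta> m)" if xy: "x \<le> y" "y \<le> zg \<theta> m" for x y m
  proof -
    let ?z = "zg \<theta> m"
    have c3: "(?z - x) * C t y \<le> (?z - y) * C t x + (y - x) * C t ?z"
      using convex3[OF cv xy] .
    have p3: "tp \<Phi> K1 x y ?z"
      unfolding \<Phi>_def
      by (rule Phi_tp[OF K1 _ _ w0 ws w1 xy]) (use V_tp[OF I1] sm in \<open>auto simp: V_def\<close>)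
    then have "(?z - x) * \<Phi> y \<le> (?z - y) * \<Phi> x + (y - x) * (\<Phi> ?z + K1)" by (simp add: tp_def)
    from mult_left_mono[OF this less_imp_le[OF al]]
    have p4: "(?z - x) * (\<alpha> * \<Phi> y) \<le> (?z - y) * (\<alpha> * \<Phi> x) + (y - x) * (\<alpha> * \<Phi> ?z + \<alpha> * K1)"
      by (simp add: algebra_simps)
    have "(y - x) * (\<alpha> * K1) \<le> (y - x) * K t" using KK xy by (intro mult_left_mono) auto
    then show ?thesis using c3 p4 unfolding tp_def Heq by (simp add: algebra_simps)
  qed
  define P1 where "P1 = (\<lambda>m. zg \<theta> m < min (lo1 - \<theta>) Cm)"
  obtain m1 where m1: "zg \<theta> m1 \<le> min (lo1 - \<theta>) Cm - \<theta>" using grid_below[OF th] by blast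
  have GI: "P1 (GREATEST m. P1 m) \<and> (\<forall>m. P1 m \<longrightarrow> m \<le> (GREATEST m. P1 m))"
    by (rule int_greatest[of P1 m1 "\<lceil>min (lo1 - \<theta>) Cm / \<theta>\<rceil>"])
       (use m1 th in \<open>auto simp: P1_def intro: grid_ub\<close>)
  define iI where "iI = (GREATEST m. P1 m)"
  have Ieq: "I = zg \<theta> iI" unfolding Idef Inext_def iI_def P1_def Cm_def by simp
  have I1': "I < lo1 - \<theta>" "I < Cm" using GI Ieq by (auto simp: iI_def P1_def)
  define nn where "nn = n0 C \<theta> t"
  have nnp: "zg \<theta> nn < Cm" "Cm \<le> zg \<theta> (nn + 1)" using n0_prop[OF th] by (auto simp: nn_def Cm_def)
  have iInn: "iI \<le> nn"
  proof (rule ccontr)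
    assume "\<not> iI \<le> nn"
    then have "nn + 1 \<le> iI" by simp
    then have "zg \<theta> (nn + 1) \<le> I" using zg_mono[OF th] Ieq by simp
    then show False using nnp I1' by simp
  qed
  define P2 where "P2 = (\<lambda>m. Cm \<le> zg \<theta> m \<and> C t (zg \<theta> nn) + K t < C t (zg \<theta> m))"
  obtain R2 where R2: "R2 \<ge> 0" "\<forall>y. R2 \<le> \<bar>y\<bar> \<longrightarrow> C t (zg \<theta> nn) + K t < C t y"
    using coerc[OF co] by blast
  obtain m2 where m2: "max R2 Cm \<le> zg \<theta> m2" using grid_above[OF th] by blast
  have LU: "P2 (LEAST m. P2 m) \<and> (\<forall>m. P2 m \<longrightarrow> (LEAST m. P2 m) \<le> m)"
    by (rule int_least[of P2 m2 "\<lfloor>Cm / \<theta>\<rfloor>"]) (use m2 R2 th in \<open>auto simp: P2_def intro: grid_lb\<close>)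
  define iU where "iU = (LEAST m. P2 m)"
  have SUeq: "SU C K \<theta> t = zg \<theta> iU" unfolding SU_def iU_def P2_def Cm_def nn_def by simp
  have SUp: "Cm \<le> SU C K \<theta> t" "C t (zg \<theta> nn) + K t < C t (SU C K \<theta> t)"
    using LU SUeq by (auto simp: iU_def P2_def)
  define A where "A = {m. I \<le> zg \<theta> m \<and> zg \<theta> m \<le> SU C K \<theta> t}"
  have finA: "finite A" unfolding A_def by (rule fin_grid[OF th])
  have nnA: "nn \<in> A" using zg_mono[OF th iInn] Ieq nnp SUp by (auto simp: A_def)
  have iIA: "iI \<in> A" using zg_mono[OF th iInn] Ieq nnp SUp by (auto simp: A_def)
  define mv where "mv = Min ((\<lambda>m. H (zg \<theta> m)) ` A)"
  define B where "B = {m \<in> A. H (zg \<theta> m) = mv}"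
  have mvin: "mv \<in> (\<lambda>m. H (zg \<theta> m)) ` A" unfolding mv_def using finA nnA by (intro Min_in) auto
  have finB: "finite B" using finA by (simp add: B_def)
  have neB: "B \<noteq> {}" using mvin by (auto simp: B_def)
  define iS where "iS = Max B"
  have iSB: "iS \<in> B" unfolding iS_def using Max_in[OF finB neB] .
  have Seq: "S = zg \<theta> iS" unfolding Sdef Sgrid_def Let_def iS_def B_def mv_def A_def by simp
  have iSA: "iS \<in> A" and HS: "H S = mv" using iSB Seq by (auto simp: B_def)
  have HSA: "H S \<le> H (zg \<theta> m)" if "m \<in> A" for m
    unfolding HS mv_def using finA that by (intro Min_le) auto
  have glob: "H S \<le> H (zg \<theta> m)" for m
  proof (cases "zg \<theta> m < I")
    case True
    have "\<Phi> (zg \<theta> m) = \<Phi> I"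
      unfolding \<Phi>_def
      by (rule Phi_const[of lo1 V "H1 S1 + K1", OF _ th]) (use V_const[OF I1] True I1' in \<open>auto simp: V_def\<close>)
    moreover have "C t I \<le> C t (zg \<theta> m)" using convex_dec[OF cv cm] True I1' by auto
    ultimately have "H I \<le> H (zg \<theta> m)" by (simp add: Heq)
    moreover have "H S \<le> H I" using HSA[OF iIA] Ieq by simp
    ultimately show ?thesis by simp
  next
    case F1: False
    show ?thesis
    proof (cases "SU C K \<theta> t < zg \<theta> m")
      case True
      have "C t (SU C K \<theta> t) \<le> C t (zg \<theta> m)" using convex_inc[OF cv cm] True SUp by auto
      then have c1: "C t (zg \<theta> nn) + K t < C t (zg \<theta> m)" using SUp by simp
      have "zg \<theta> nn < zg \<theta> m" using nnA True by (auto simp: A_def)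
      then have "nn \<le> m" using zg_less_iff[OF th] by simp
      then have p1: "\<Phi> (zg \<theta> nn) \<le> \<Phi> (zg \<theta> m) + K1"
        unfolding \<Phi>_def
        by (rule Phi_mono[OF _ _ w0 ws w1 K1, rotated 2]) (use V_mono[OF I1 th] sm in \<open>auto simp: V_def\<close>)
      from mult_left_mono[OF p1 less_imp_le[OF al]]
      have "\<alpha> * \<Phi> (zg \<theta> nn) \<le> \<alpha> * \<Phi> (zg \<theta> m) + \<alpha> * K1" by (simp add: algebra_simps)
      then have "H (zg \<theta> nn) \<le> H (zg \<theta> m)" using c1 KK by (simp add: Heq)
      then show ?thesis using HSA[OF nnA] by simp
    next
      case False
      then have "m \<in> A" using F1 by (auto simp: A_def)
      then show ?thesis by (rule HSA)
    qed
  qed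
  define P3 where "P3 = (\<lambda>m. zg \<theta> m \<le> I \<and> C t I + K t < C t (zg \<theta> m))"
  obtain R3 where R3: "R3 \<ge> 0" "\<forall>y. R3 \<le> \<bar>y\<bar> \<longrightarrow> C t I + K t < C t y"
    using coerc[OF co] by blast
  obtain m3 where m3: "zg \<theta> m3 \<le> min (- R3) I" using grid_below[OF th] by blast
  have GB: "P3 (GREATEST m. P3 m) \<and> (\<forall>m. P3 m \<longrightarrow> m \<le> (GREATEST m. P3 m))"
    by (rule int_greatest[of P3 m3 "\<lceil>I / \<theta>\<rceil>"]) (use m3 R3 th in \<open>auto simp: P3_def intro: grid_ub\<close>)
  define iB where "iB = (GREATEST m. P3 m)"
  have Ibeq: "Ib = zg \<theta> (iB + 1)" unfolding Ibdef Ibarnext_def iB_def P3_def by (simp add: zg_def algebra_simps)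
  have "iB \<le> iI" using GB Ieq zg_le_iff[OF th] by (auto simp: iB_def P3_def)
  moreover have "iB \<noteq> iI" using GB Ieq Kt by (auto simp: iB_def P3_def)
  ultimately have "iB + 1 \<le> iI" by simp
  then have IbI: "Ib \<le> I" using zg_mono[OF th] Ieq Ibeq by simp
  have IS: "I \<le> S" using iSA Seq by (simp add: A_def)
  have sp: "s \<le> S \<and> H s \<le> H S + K t \<and> Ib \<le> s"
  proof (cases "K t = 0")
    case True
    then show ?thesis using sdef IbI IS by (simp add: sgrid_def)
  next
    case False
    define B' where "B' = {m::int. Ib \<le> zg \<theta> m \<and> zg \<theta> m \<le> S \<and> H (zg \<theta> m) \<le> H S + K t}"
    have finB': "finite B'"
      by (rule finite_subset[OF _ fin_grid[OF th, of Ib S]]) (auto simp: B'_def)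
    have "iS \<in> B'" using Seq IbI IS Kt by (simp add: B'_def)
    then have neB': "B' \<noteq> {}" by auto
    have "Min B' \<in> B'" using Min_in[OF finB' neB'] .
    moreover have "s = zg \<theta> (Min B')" using False unfolding sdef sgrid_def B'_def by simp
    ultimately show ?thesis by (simp add: B'_def)
  qed
  show ?thesis
    unfolding inv_def
  proof (intro conjI allI impI)
    show "0 \<le> K t" by (rule Kt)
    show "s \<le> S" "H s \<le> H S + K t" "Ib \<le> s" using sp by auto
    show "H S \<le> H (zg \<theta> m)" for m by (rule glob)
    fix x y z assume a: "x \<le> y \<and> y \<le> z \<and> (z = S \<or> (\<exists>m. z = zg \<theta> m))"
    then obtain m where "z = zg \<theta> m" using Seq by blast
    then show "tp H (K t) x y z" using Htp a by simp
  qed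
qed



lemma sLast_prop:
  fixes f :: "real \<Rightarrow> real"
  assumes cv: "convex_on UNIV f" and co: "filterlim f at_top at_infinity"
    and cm: "\<forall>x. f m \<le> f x" and least: "\<forall>y. (\<forall>x. f y \<le> f x) \<longrightarrow> m \<le> y" and K0: "K \<ge> 0"
  shows "\<exists>!s. s \<le> m \<and> f s = f m + K"
proof -
  obtain R where R: "R \<ge> 0" "\<forall>y. R \<le> \<bar>y\<bar> \<longrightarrow> f m + K < f y" using coerc[OF co] by blast
  define a where "a = - (R + \<bar>m\<bar>)"
  have "R \<le> \<bar>a\<bar>" using R by (simp add: a_def)
  then have fa: "f m + K \<le> f a" using R by auto
  have ct: "continuous_on {a..m} f"
    using convex_on_continuous[OF open_UNIV cv] continuous_on_subset by blast
  obtain s where s: "a \<le> s" "s \<le> m" "f s = f m + K"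
    using IVT2'[of f m "f m + K" a, OF _ fa _ ct] K0 R(1) by (force simp: a_def)
  show ?thesis
  proof (rule ex1I[of _ s])
  show "s \<le> m \<and> f s = f m + K" using s by simp
  fix s' assume s': "s' \<le> m \<and> f s' = f m + K"
  have uq: "u = v" if u: "u \<le> m" "f u = f m + K" and v: "v \<le> m" "f v = f m + K" and uv: "u \<le> v" for u v
  proof (cases "K = 0")
    case True
    then have "m \<le> u" "m \<le> v" using least cm u v by auto
    then show ?thesis using u v by simp
  next
    case False
    then have Kp: "K > 0" using K0 by simp
    show ?thesis
    proof (rule ccontr)
      assume "u \<noteq> v"
      then have uv': "u < v" using uv by simp
      have "(m - u) * f v \<le> (m - v) * f u + (v - u) * f m" using convex3[OF cv uv v(1)] .
      then have "(m - u) * (f m + K) \<le> (m - v) * (f m + K) + (v - u) * f m" using u v by simp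
      then have "(m - u) * K \<le> (m - v) * K" by (simp add: algebra_simps)
      then have "m - u \<le> m - v" using Kp by simp
      then show False using uv' by simp
    qed
  qed
  show "s' = s"
  proof (cases "s' \<le> s")
    case True then show ?thesis using uq[of s' s] s s' by simp
  next
    case False then show ?thesis using uq[of s s'] s s' by simp
  qed
  qed
qed

lemma weights:
  fixes D :: "nat \<Rightarrow> real measure"
  assumes ps: "prob_space (D t)" and sb: "sets (D t) = sets borel" and th: "\<theta> > 0"
  shows "(\<forall>j. fmass \<theta> D t (int j - 1) \<ge> 0) \<and> summable (\<lambda>j. fmass \<theta> D t (int j - 1)) \<and>
         (\<Sum>j. fmass \<theta> D t (int j - 1)) \<le> 1"
proof -
  interpret prob_space "D t" by (rule ps)
  define F' where "F' = (\<lambda>n::nat. Fdist D t (zg \<theta> (int n - 1)))"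
  have we: "fmass \<theta> D t (int j - 1) = F' (Suc j) - F' j" for j
    by (simp add: fmass_def F'_def)
  have mono: "a \<le> b \<Longrightarrow> Fdist D t a \<le> Fdist D t b" for a b
    unfolding Fdist_def by (rule finite_measure_mono) (auto simp: sb)
  have Fle: "Fdist D t a \<le> 1" for a unfolding Fdist_def by simp
  have Fge: "Fdist D t a \<ge> 0" for a unfolding Fdist_def by simp
  have w0: "fmass \<theta> D t (int j - 1) \<ge> 0" for j
  proof -
    have "zg \<theta> (int j - 1) \<le> zg \<theta> (int (Suc j) - 1)" using th by (simp add: zg_def)
    then show ?thesis using mono unfolding we F'_def by fastforce
  qed
  have ps: "(\<Sum>j<n. fmass \<theta> D t (int j - 1)) \<le> 1" for n
  proof -
    have "(\<Sum>j<n. fmass \<theta> D t (int j - 1)) = F' n - F' 0"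
      unfolding we by (rule sum_lessThan_telescope)
    also have "\<dots> \<le> 1" using Fle[of "zg \<theta> (int n - 1)"] Fge[of "zg \<theta> (int 0 - 1)"] by (simp add: F'_def)
    finally show ?thesis .
  qed
  have sm: "summable (\<lambda>j. fmass \<theta> D t (int j - 1))"
    by (rule summableI_nonneg_bounded[OF w0 ps])
  show ?thesis using w0 sm suminf_le_const[OF sm ps] by blast
qed



lemma stage_step:
  assumes "t + 2 \<le> T"
  shows "Hf C K \<theta> T \<alpha> D t = (\<lambda>y. C t y + \<alpha> * (\<Sum>j. Vf C K \<theta> T \<alpha> D (Suc t) (y - zg \<theta> (int j - 1)) * fmass \<theta> D t (int j - 1)))
   \<and> Sf C K \<theta> T \<alpha> D t = Sgrid \<theta> (Hf C K \<theta> T \<alpha> D t) (Ival C K \<theta> T t) (SU C K \<theta> t)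
   \<and> sf C K \<theta> T \<alpha> D t = sgrid \<theta> (K t) (Hf C K \<theta> T \<alpha> D t) (Sf C K \<theta> T \<alpha> D t) (Ibar C K \<theta> T t)"
proof -
  define k where "k = T - 2 - t"
  have e1: "T - 1 - t = Suc k" and e2: "T - 2 - k = t" and e3: "T - 1 - Suc t = k"
    and e1': "T - Suc t = Suc k" and e3': "T - Suc (Suc t) = k" and e2': "T - Suc (Suc k) = t"
    using assms by (auto simp: k_def)
  obtain H1 S1 s1 where st: "stage C K \<theta> T \<alpha> D k = (H1, S1, s1)" by (metis prod_cases3)
  have V: "Vf C K \<theta> T \<alpha> D (Suc t) = Vof H1 S1 s1 (K (Suc t))"
    by (simp add: Vf_def Hf_def Sf_def sf_def e3 e3' st)
  show ?thesis by (simp add: Hf_def Sf_def sf_def e1 e2 e1' e2' st V Let_def Ival_def)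
qed

lemma stage_last:
  assumes "1 \<le> T"
  shows "Hf C K \<theta> T \<alpha> D (T - 1) = C (T - 1) \<and> Sf C K \<theta> T \<alpha> D (T - 1) = Cmin C (T - 1)
    \<and> sf C K \<theta> T \<alpha> D (T - 1) = sLast C K T \<and> Ibar C K \<theta> T (T - 1) = sLast C K T"
  by (simp add: Hf_def Sf_def sf_def Ibar_def)

lemma Ibar_step:
  assumes "t + 2 \<le> T"
  shows "Ibar C K \<theta> T t = Ibarnext C K \<theta> t (Inext C \<theta> t (Ibar C K \<theta> T (Suc t)))"
proof -
  define k where "k = T - 2 - t"
  have e1: "T - 1 - t = Suc k" and e2: "T - 2 - k = t" and e3: "T - 1 - Suc t = k"
    and e1': "T - Suc t = Suc k" and e3': "T - Suc (Suc t) = k" and e2': "T - Suc (Suc k) = t"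
    using assms by (auto simp: k_def)
  show ?thesis by (simp add: Ibar_def e1 e2 e3 e1' e3' e2')
qed

theorem theorem3p1:
  fixes T :: nat and \<alpha> \<theta> :: real
    and c K :: "nat \<Rightarrow> real" and G :: "nat \<Rightarrow> real \<Rightarrow> real"
    and D :: "nat \<Rightarrow> real measure"
  assumes T2: "T \<ge> 2"
    and alpha: "0 < \<alpha>" "\<alpha> \<le> 1"
    and theta: "\<theta> > 0"
    and Kpos: "\<forall>t<T. K t \<ge> 0"
    and Kdec: "\<forall>t. t + 2 \<le> T \<longrightarrow> K t \<ge> \<alpha> * K (Suc t)"
    and demand: "\<forall>t<T. prob_space (D t) \<and> sets (D t) = sets borel \<and>
                   (AE x in D t. 0 \<le> x) \<and> integrable (D t) (\<lambda>x. x)"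
    and Cconv: "\<forall>t<T. convex_on UNIV (Ccost \<alpha> c G D t) \<and>
                   filterlim (Ccost \<alpha> c G D t) at_top at_infinity"
    and finite_exp: "\<forall>t. t + 2 \<le> T \<longrightarrow> (\<forall>y. summable (\<lambda>j.
                   \<bar>Vf (Ccost \<alpha> c G D) K \<theta> T \<alpha> D (Suc t) (y - zg \<theta> (int j - 1))
                     * fmass \<theta> D t (int j - 1)\<bar>))"
  shows "\<forall>t<T.
           subKconvex \<theta> (K t) (Hf (Ccost \<alpha> c G D) K \<theta> T \<alpha> D t) \<and>
           subKconvex \<theta> (K t) (Vf (Ccost \<alpha> c G D) K \<theta> T \<alpha> D t) \<and>
           (\<forall>j::int. Hf (Ccost \<alpha> c G D) K \<theta> T \<alpha> D t (Sf (Ccost \<alpha> c G D) K \<theta> T \<alpha> D t)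
                      \<le> Hf (Ccost \<alpha> c G D) K \<theta> T \<alpha> D t (zg \<theta> j))"
proof -
  define CC where "CC = Ccost \<alpha> c G D"
  have invall: "inv \<theta> (Hf CC K \<theta> T \<alpha> D (T - 1 - k)) (Sf CC K \<theta> T \<alpha> D (T - 1 - k))
      (sf CC K \<theta> T \<alpha> D (T - 1 - k)) (K (T - 1 - k)) (Ibar CC K \<theta> T (T - 1 - k))" if "k < T" for k
    using that
  proof (induction k)
    case 0
    have T1: "T - 1 < T" using T2 by simp
    have cv: "convex_on UNIV (CC (T - 1))" and co: "filterlim (CC (T - 1)) at_top at_infinity"
      using Cconv T1 by (auto simp: CC_def)
    have K0: "K (T - 1) \<ge> 0" using Kpos T1 by simp
    define m where "m = Cmin CC (T - 1)"
    have cm: "\<forall>x. CC (T - 1) m \<le> CC (T - 1) x" and least: "\<forall>y. (\<forall>x. CC (T - 1) y \<le> CC (T - 1) x) \<longrightarrow> m \<le> y"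
      using cmin_exists[OF cv co] unfolding m_def Cmin_def by blast+
    have ex: "\<exists>!s. s \<le> m \<and> CC (T - 1) s = CC (T - 1) m + K (T - 1)"
      by (rule sLast_prop[OF cv co cm least K0])
    have sl: "sLast CC K T \<le> m \<and> CC (T - 1) (sLast CC K T) = CC (T - 1) m + K (T - 1)"
      unfolding sLast_def m_def[symmetric] by (rule theI'[OF ex])
    have st: "Hf CC K \<theta> T \<alpha> D (T - 1) = CC (T - 1) \<and> Sf CC K \<theta> T \<alpha> D (T - 1) = m
      \<and> sf CC K \<theta> T \<alpha> D (T - 1) = sLast CC K T \<and> Ibar CC K \<theta> T (T - 1) = sLast CC K T"
      using stage_last[of T CC K \<theta> \<alpha> D] T2 by (simp add: m_def)
    have tpC: "tp (CC (T - 1)) (K (T - 1)) x y z" if "x \<le> y" "y \<le> z" for x y z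
    proof -
      have "(z - x) * CC (T - 1) y \<le> (z - y) * CC (T - 1) x + (y - x) * CC (T - 1) z"
        using convex3[OF cv that] .
      moreover have "0 \<le> (y - x) * K (T - 1)" using that K0 by simp
      ultimately show ?thesis unfolding tp_def by (simp add: algebra_simps)
    qed
    show ?case unfolding inv_def using st sl cm K0 tpC by auto
  next
    case (Suc k)
    define t where "t = T - 1 - Suc k"
    have t2: "t + 2 \<le> T" and ts: "Suc t = T - 1 - k" and tT: "t < T" using Suc.prems by (auto simp: t_def)
    have IH: "inv \<theta> (Hf CC K \<theta> T \<alpha> D (Suc t)) (Sf CC K \<theta> T \<alpha> D (Suc t))
      (sf CC K \<theta> T \<alpha> D (Suc t)) (K (Suc t)) (Ibar CC K \<theta> T (Suc t))"
      using Suc.IH Suc.prems ts by simp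
    have cv: "convex_on UNIV (CC t)" and co: "filterlim (CC t) at_top at_infinity"
      using Cconv tT by (auto simp: CC_def)
    have W: "(\<forall>j. fmass \<theta> D t (int j - 1) \<ge> 0) \<and> summable (\<lambda>j. fmass \<theta> D t (int j - 1)) \<and>
         (\<Sum>j. fmass \<theta> D t (int j - 1)) \<le> 1"
      using weights[of D t \<theta>] demand tT theta by auto
    have SS: "Hf CC K \<theta> T \<alpha> D t = (\<lambda>y. CC t y + \<alpha> * (\<Sum>j. Vf CC K \<theta> T \<alpha> D (Suc t) (y - zg \<theta> (int j - 1)) * fmass \<theta> D t (int j - 1)))
   \<and> Sf CC K \<theta> T \<alpha> D t = Sgrid \<theta> (Hf CC K \<theta> T \<alpha> D t) (Ival CC K \<theta> T t) (SU CC K \<theta> t)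
   \<and> sf CC K \<theta> T \<alpha> D t = sgrid \<theta> (K t) (Hf CC K \<theta> T \<alpha> D t) (Sf CC K \<theta> T \<alpha> D t) (Ibar CC K \<theta> T t)"
      by (rule stage_step[OF t2])
    have Vf1: "Vf CC K \<theta> T \<alpha> D (Suc t) = Vof (Hf CC K \<theta> T \<alpha> D (Suc t)) (Sf CC K \<theta> T \<alpha> D (Suc t))
      (sf CC K \<theta> T \<alpha> D (Suc t)) (K (Suc t))" by (simp add: Vf_def)
    have "inv \<theta> (Hf CC K \<theta> T \<alpha> D t) (Sf CC K \<theta> T \<alpha> D t) (sf CC K \<theta> T \<alpha> D t) (K t) (Ibar CC K \<theta> T t)"
    proof (rule step[where C=CC and t=t and K=K and w="\<lambda>j. fmass \<theta> D t (int j - 1)"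
          and I="Ival CC K \<theta> T t", OF theta alpha(1) cv co _ _ IH])
      show "K t \<ge> 0" using Kpos tT by simp
      show "\<alpha> * K (Suc t) \<le> K t" using Kdec t2 by simp
      show "summable (\<lambda>j. \<bar>Vof (Hf CC K \<theta> T \<alpha> D (Suc t)) (Sf CC K \<theta> T \<alpha> D (Suc t))
          (sf CC K \<theta> T \<alpha> D (Suc t)) (K (Suc t)) (y - zg \<theta> (int j - 1)) * fmass \<theta> D t (int j - 1)\<bar>)" for y
      proof -
        have "summable (\<lambda>j. \<bar>Vf CC K \<theta> T \<alpha> D (Suc t) (y - zg \<theta> (int j - 1)) * fmass \<theta> D t (int j - 1)\<bar>)"
          using finite_exp t2 unfolding CC_def by blast
        then show ?thesis unfolding Vf1 .
      qed
      show "\<And>j. fmass \<theta> D t (int j - 1) \<ge> 0" "summable (\<lambda>j. fmass \<theta> D t (int j - 1))"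
        "(\<Sum>j. fmass \<theta> D t (int j - 1)) \<le> 1" using W by auto
      show "Hf CC K \<theta> T \<alpha> D t = (\<lambda>y. CC t y + \<alpha> * (\<Sum>j. Vof (Hf CC K \<theta> T \<alpha> D (Suc t)) (Sf CC K \<theta> T \<alpha> D (Suc t))
          (sf CC K \<theta> T \<alpha> D (Suc t)) (K (Suc t)) (y - zg \<theta> (int j - 1)) * fmass \<theta> D t (int j - 1)))"
        using SS Vf1 by simp
      show "Ival CC K \<theta> T t = Inext CC \<theta> t (Ibar CC K \<theta> T (Suc t))" by (simp add: Ival_def)
      show "Ibar CC K \<theta> T t = Ibarnext CC K \<theta> t (Ival CC K \<theta> T t)"
        using Ibar_step[OF t2] by (simp add: Ival_def)
      show "Sf CC K \<theta> T \<alpha> D t = Sgrid \<theta> (Hf CC K \<theta> T \<alpha> D t) (Ival CC K \<theta> T t) (SU CC K \<theta> t)" using SS by simp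
      show "sf CC K \<theta> T \<alpha> D t = sgrid \<theta> (K t) (Hf CC K \<theta> T \<alpha> D t) (Sf CC K \<theta> T \<alpha> D t) (Ibar CC K \<theta> T t)" using SS by simp
    qed
    then show ?case by (simp add: t_def)
  qed
  show ?thesis
  proof (intro allI impI conjI)
    fix t assume tT: "t < T"
    then have e: "T - 1 - (T - 1 - t) = t" by simp
    have I: "inv \<theta> (Hf CC K \<theta> T \<alpha> D t) (Sf CC K \<theta> T \<alpha> D t) (sf CC K \<theta> T \<alpha> D t) (K t) (Ibar CC K \<theta> T t)"
      using invall[of "T - 1 - t"] tT e by simp
    have K0: "K t \<ge> 0" using Kpos tT by simp
    show "subKconvex \<theta> (K t) (Hf (Ccost \<alpha> c G D) K \<theta> T \<alpha> D t)"
      unfolding CC_def[symmetric]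
    proof (rule tp_subK[OF K0])
      fix x y m assume "x \<le> y" "y \<le> zg \<theta> m"
      moreover have "\<forall>x y z. x \<le> y \<and> y \<le> z \<and> (z = Sf CC K \<theta> T \<alpha> D t \<or> (\<exists>m. z = zg \<theta> m)) \<longrightarrow>
            tp (Hf CC K \<theta> T \<alpha> D t) (K t) x y z" using I unfolding inv_def by blast
      ultimately show "tp (Hf CC K \<theta> T \<alpha> D t) (K t) x y (zg \<theta> m)" by blast
    qed
    show "subKconvex \<theta> (K t) (Vf (Ccost \<alpha> c G D) K \<theta> T \<alpha> D t)"
      unfolding CC_def[symmetric] Vf_def
      by (rule tp_subK[OF K0]) (rule V_tp[OF I])
    show "Hf (Ccost \<alpha> c G D) K \<theta> T \<alpha> D t (Sf (Ccost \<alpha> c G D) K \<theta> T \<alpha> D t)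
                      \<le> Hf (Ccost \<alpha> c G D) K \<theta> T \<alpha> D t (zg \<theta> j)" for j
      using I unfolding CC_def inv_def by blast
  qed
qed


end
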